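(* Assume $(H_S(BS))$, let $\mathbf m_\lambda:(0,1]\to\mathbb{N}$ satisfy $\mathbf m_\lambda\to\infty$ as $\lambda\to0$, and let $(N^S_t(i))_{t\ge0,i\in\mathbb{Z}}$ be i.i.d. $SR(\mu_S)$-processes. (i) With $K^\lambda_t=(2\mathbf m_\lambda+1)^{-1}\#\{i\in\{-\mathbf m_\lambda,\dots,\mathbf m_\lambda\}:N^S_{T_St}(i)>0\}$ and $U^\lambda_t=(\psi_S(K^\lambda_t)/T_S)\wedge1$, for every $T>0$, $\sup_{t\in[0,T]}|U^\lambda_t-t\wedge1|\to0$ almost surely as $\lambda\to0$. (ii) For every $t\ge0$ and $k\ge0$, $\Pr[|C(\min(N^S_{T_St},1),0)|=k]=q_k(t\wedge1)$, where $q_0(z)=\nu_S((zT_S,T_S))$ and $q_k(z)=k[\nu_S((zT_S,T_S))]^2[\nu_S((0,zT_S))]^k$ for $k\ge1$, $z\in[0,1]$.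
   Context: $(H_S(BS))$: $\mu_S$ is a probability measure on $(0,\infty)$ with bounded support and mean $m_S$; $T_S=\max\operatorname{supp}\mu_S$; $\nu_S(dt)=m_S^{-1}\mu_S((t,\infty))dt$ (support $[0,T_S]$). $\psi_S:(0,1)\to(0,T_S)$ is the inverse of $t\mapsto\nu_S((0,t))$, extended by $\psi_S(0)=0$, $\psi_S(1)=T_S$. A $SR(\mu)$-process: $N_t=\#\{k\ge1:T_k\le t\}$ with $T_1\sim\nu_\mu(dt)=m_\mu^{-1}\mu((t,\infty))dt$, $T_{k+1}=T_k+X_k$, $(X_k)$ i.i.d. with law $\mu$ independent of $T_1$. $C(\eta,i)$ is $\emptyset$ if $\eta(i)=0$, otherwise the maximal block of consecutive integers containing $i$ where $\eta\equiv1$; $|\cdot|$ is cardinality (infinite allowed). *)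

theory Defs
  imports "HOL-Probability.Probability"
begin

definition mean_S :: "real measure \<Rightarrow> real" where
  "mean_S mu = integral\<^sup>L mu (\<lambda>x. x)"

definition supp_S :: "real measure \<Rightarrow> real set" where
  "supp_S mu = {x. \<forall>e>0. emeasure mu (ball x e) > 0}"

definition T_S :: "real measure \<Rightarrow> real" where
  "T_S mu = Sup (supp_S mu)"

definition nu_S :: "real measure \<Rightarrow> real measure" where
  "nu_S mu = density lborel
     (\<lambda>t. indicator {0<..} t * ennreal (measure mu {t<..} / mean_S mu))"

definition psi_S :: "real measure \<Rightarrow> real \<Rightarrow> real" where
  "psi_S mu z =
     (if z \<le> 0 then 0
      else if z \<ge> 1 then T_S mu
      else (THE t. t \<in> {0<..<T_S mu} \<and> measure (nu_S mu) {0<..<t} = z))"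

text \<open>Counting process of a stationary renewal process built from
  Z 0 = T_1 and Z (Suc k) = X_(k+1): T_k = Z 0 + ... + Z (k-1).
  N_t = #{k \<ge> 1. T_k \<le> t}, possibly infinite.\<close>
definition sr_count :: "(nat \<Rightarrow> real) \<Rightarrow> real \<Rightarrow> enat" where
  "sr_count Z t =
     (let S = {k::nat. 1 \<le> k \<and> (\<Sum>j<k. Z j) \<le> t}
      in if finite S then enat (card S) else \<infinity>)"

definition Cblock :: "(int \<Rightarrow> 'b::{zero,one}) \<Rightarrow> int \<Rightarrow> int set" where
  "Cblock eta i =
     (if eta i = 0 then {}
      else {j. \<forall>l. min i j \<le> l \<and> l \<le> max i j \<longrightarrow> eta l = 1})"

definition q_S :: "real measure \<Rightarrow> nat \<Rightarrow> real \<Rightarrow> real" where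
  "q_S mu k z =
     (if k = 0 then measure (nu_S mu) {z * T_S mu<..<T_S mu}
      else real k * (measure (nu_S mu) {z * T_S mu<..<T_S mu})^2
                  * (measure (nu_S mu) {0<..<z * T_S mu})^k)"

end

theory Submission
  imports Defs
begin


locale mu_setting =
  fixes mu :: "real measure"
  assumes mu_prob: "prob_space mu"
    and mu_sets: "sets mu = sets borel"
    and mu_pos: "emeasure mu {..0} = 0"
    and mu_bdd: "\<exists>B. emeasure mu {B<..} = 0"
begin

interpretation mu: prob_space mu by (rule mu_prob)

lemma space_mu: "space mu = UNIV"
  using sets_eq_imp_space_eq[OF mu_sets] by simp

lemma mu_meas[measurable]: "A \<in> sets borel \<Longrightarrow> A \<in> sets mu"
  using mu_sets by simp

lemma mu_pos': "measure mu {..0} = 0"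
  using mu_pos by (simp add: mu.emeasure_eq_measure)

lemma mu_gt0: "measure mu {0<..} = 1"
proof -
  have "{0<..} = space mu - {..0::real}" by (auto simp: space_mu)
  then have "measure mu {0<..} = 1 - measure mu {..0}"
    using mu.prob_compl[of "{..0}"] by simp
  then show ?thesis using mu_pos' by simp
qed

definition S0 where "S0 = {x. measure mu {x<..} = 0}"

lemma S0_nonempty: "S0 \<noteq> {}"
  using mu_bdd by (auto simp: S0_def mu.emeasure_eq_measure)

lemma S0_pos: "x \<in> S0 \<Longrightarrow> x > 0"
proof (rule ccontr)
  assume "x \<in> S0" "\<not> x > 0"
  then have "{0<..} \<subseteq> {x<..}" by auto
  then have "measure mu {0<..} \<le> measure mu {x<..}"
    by (intro mu.finite_measure_mono) auto
  with \<open>x \<in> S0\<close> mu_gt0 show False by (simp add: S0_def)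
qed

lemma S0_up: "x \<in> S0 \<Longrightarrow> x \<le> y \<Longrightarrow> y \<in> S0"
proof -
  assume "x \<in> S0" "x \<le> y"
  then have "measure mu {y<..} \<le> measure mu {x<..}"
    by (intro mu.finite_measure_mono) auto
  with \<open>x \<in> S0\<close> show "y \<in> S0" by (simp add: S0_def measure_nonneg antisym)
qed

definition Tp where "Tp = Inf S0"

lemma bdd_S0: "bdd_below S0"
  using S0_pos by (meson bdd_below.I less_imp_le)

lemma Tp_ge0: "Tp \<ge> 0"
  unfolding Tp_def using S0_nonempty S0_pos by (meson cInf_greatest less_imp_le)

lemma Tp_in: "Tp \<in> S0"
proof -
  have sub1: "x \<in> (\<Union>n. {Tp + 1/(Suc n)<..})" if lt: "Tp < x" for x
  proof -
    obtain n where "1 / Suc n < x - Tp"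
      using lt by (metis diff_gt_0_iff_gt nat_approx_posE)
    then have "Tp + 1/Suc n < x" by simp
    then show ?thesis by blast
  qed
  have sub2: "Tp < x" if "Tp + 1/Suc n < x" for x n
    using that by (smt (verit) of_nat_0_less_iff zero_less_Suc divide_pos_pos)
  have sub: "{Tp<..} = (\<Union>n. {Tp + 1/(Suc n)<..})"
    using sub1 sub2 by auto
  have "Tp + 1/Suc n \<in> S0" for n
  proof -
    have "Tp < Tp + 1/Suc n" by simp
    then obtain y where "y \<in> S0" "y < Tp + 1/Suc n"
      unfolding Tp_def using S0_nonempty by (meson cInf_lessD)
    then show ?thesis using S0_up by auto
  qed
  then have "emeasure mu {Tp + 1/(Suc n)<..} = 0" for n
    by (simp add: S0_def mu.emeasure_eq_measure)
  then have "emeasure mu (\<Union>n. {Tp + 1/(Suc n)<..}) = 0"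
    by (intro emeasure_UN_eq_0) auto
  then show ?thesis using sub by (simp add: S0_def mu.emeasure_eq_measure)
qed

lemma Tp_pos: "Tp > 0" using Tp_in S0_pos by blast

lemma below_Tp: "t < Tp \<Longrightarrow> measure mu {t<..} > 0"
proof -
  assume "t < Tp"
  then have "t \<notin> S0" unfolding Tp_def using bdd_S0 by (meson cInf_lower not_le)
  then show ?thesis by (simp add: S0_def measure_nonneg less_le)
qed

lemma mu_above_Tp: "Tp \<le> t \<Longrightarrow> measure mu {t<..} = 0"
  using Tp_in S0_up by (simp add: S0_def)

lemma T_S_eq: "T_S mu = Tp"
proof -
  have inS: "Tp \<in> supp_S mu"
    unfolding supp_S_def
  proof safe
    fix e :: real assume e: "e > 0"
    have "measure mu {Tp - e/2<..} > 0" using e by (intro below_Tp) simp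
    moreover have "{Tp - e/2<..} \<subseteq> ball Tp e \<union> {Tp<..}"
      using e by (auto simp: dist_real_def)
    then have "measure mu {Tp - e/2<..} \<le> measure mu (ball Tp e \<union> {Tp<..})"
      by (intro mu.finite_measure_mono) auto
    also have "\<dots> \<le> measure mu (ball Tp e) + measure mu {Tp<..}"
      by (intro measure_Un_le) auto
    finally show "emeasure mu (ball Tp e) > 0"
      using Tp_in by (simp add: S0_def mu.emeasure_eq_measure)
  qed
  have le: "x \<le> Tp" if "x \<in> supp_S mu" for x
  proof (rule ccontr)
    assume "\<not> x \<le> Tp"
    then have "ball x (x - Tp) \<subseteq> {Tp<..}" by (auto simp: dist_real_def)
    then have "measure mu (ball x (x - Tp)) \<le> measure mu {Tp<..}"
      by (intro mu.finite_measure_mono) auto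
    then have "measure mu (ball x (x - Tp)) = 0"
      using Tp_in by (simp add: S0_def measure_nonneg antisym)
    moreover have "x - Tp > 0" using \<open>\<not> x \<le> Tp\<close> by simp
    then have "emeasure mu (ball x (x - Tp)) > 0"
      using that unfolding supp_S_def by blast
    ultimately show False by (simp add: mu.emeasure_eq_measure)
  qed
  show ?thesis unfolding T_S_def
    by (intro cSup_eq_maximum inS le)
qed

end

locale nu_setting = mu_setting +
  assumes nu_prob: "prob_space (nu_S mu)"
begin

interpretation mu: prob_space mu by (rule mu_prob)
interpretation nu: prob_space "nu_S mu" by (rule nu_prob)

definition g where "g t = measure mu {t<..}"

lemma g_meas[measurable]: "g \<in> borel_measurable borel"
proof -
  have "mono (\<lambda>t. - g t)"
    unfolding mono_def g_def by (auto intro!: mu.finite_measure_mono)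
  then have "(\<lambda>t. - g t) \<in> borel_measurable borel" by (rule borel_measurable_mono)
  then have "(\<lambda>t. - (- g t)) \<in> borel_measurable borel" by measurable
  then show ?thesis by simp
qed

definition dens where "dens t = indicator {0<..} t * ennreal (g t / mean_S mu)"

lemma nu_eq: "nu_S mu = density lborel dens"
  unfolding nu_S_def dens_def g_def by simp

lemma dens_meas[measurable]: "dens \<in> borel_measurable borel"
  unfolding dens_def by measurable

lemma dens_meas'[measurable]: "dens \<in> borel_measurable lborel"
  using dens_meas by simp

lemma sets_nu[measurable_cong]: "sets (nu_S mu) = sets borel"
  by (simp add: nu_eq)

lemma space_nu: "space (nu_S mu) = UNIV"
  by (simp add: nu_eq)

lemma emeasure_nu: "A \<in> sets borel \<Longrightarrow> emeasure (nu_S mu) A = (\<integral>\<^sup>+ x. dens x * indicator A x \<partial>lborel)"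
  unfolding nu_eq by (rule emeasure_density) auto

lemma mean_pos: "mean_S mu > 0"
proof (rule ccontr)
  assume "\<not> mean_S mu > 0"
  then have "g t / mean_S mu \<le> 0" for t
    by (simp add: divide_nonneg_nonpos g_def)
  then have "dens t = 0" for t by (simp add: dens_def ennreal_neg)
  then have "emeasure (nu_S mu) UNIV = 0" by (simp add: emeasure_nu)
  then show False using nu.emeasure_space_1 space_nu by simp
qed

lemma nu_null: "A \<in> null_sets lborel \<Longrightarrow> emeasure (nu_S mu) A = 0"
proof -
  assume A: "A \<in> null_sets lborel"
  have "AE x in lborel. x \<in> A \<longrightarrow> dens x = 0"
    using AE_not_in[OF A] by eventually_elim auto
  with A have "A \<in> null_sets (nu_S mu)"
    unfolding nu_eq by (subst null_sets_density_iff) auto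
  then show ?thesis by auto
qed

lemma nu_single: "measure (nu_S mu) {x} = 0"
proof -
  have "{x} \<in> null_sets lborel" by (auto simp: null_sets_def)
  then show ?thesis using nu_null[of "{x}"] by (simp add: nu.emeasure_eq_measure)
qed

lemma nu_nonpos: "measure (nu_S mu) {..0} = 0"
proof -
  have "dens x * indicator {..0} x = 0" for x
    by (auto simp: dens_def indicator_def)
  then have eq: "(\<lambda>x. dens x * indicator {..0} x) = (\<lambda>_. 0)" by (rule ext)
  have "emeasure (nu_S mu) {..0} = (\<integral>\<^sup>+ x. dens x * indicator {..0} x \<partial>lborel)"
    by (rule emeasure_nu) simp
  also have "\<dots> = 0" by (subst eq) simp
  finally have "emeasure (nu_S mu) {..0} = 0" .
  then show ?thesis by (simp add: nu.emeasure_eq_measure)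
qed

lemma nu_aboveT: "measure (nu_S mu) {Tp<..} = 0"
proof -
  have "dens x * indicator {Tp<..} x = 0" for x
    by (auto simp: dens_def indicator_def g_def mu_above_Tp)
  then have eq: "(\<lambda>x. dens x * indicator {Tp<..} x) = (\<lambda>_. 0)" by (rule ext)
  have "emeasure (nu_S mu) {Tp<..} = (\<integral>\<^sup>+ x. dens x * indicator {Tp<..} x \<partial>lborel)"
    by (rule emeasure_nu) simp
  also have "\<dots> = 0" by (subst eq) simp
  finally have "emeasure (nu_S mu) {Tp<..} = 0" .
  then show ?thesis by (simp add: nu.emeasure_eq_measure)
qed

lemma nu_Ioo_pos:
  assumes "0 \<le> a" "a < b" "b \<le> Tp"
  shows "measure (nu_S mu) {a<..<b} > 0"
proof (rule ccontr)
  assume "\<not> measure (nu_S mu) {a<..<b} > 0"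
  then have "measure (nu_S mu) {a<..<b} = 0"
    using measure_nonneg[of "nu_S mu" "{a<..<b}"] by linarith
  then have "emeasure (nu_S mu) {a<..<b} = 0"
    by (simp add: nu.emeasure_eq_measure)
  then have "(\<integral>\<^sup>+ x. dens x * indicator {a<..<b} x \<partial>lborel) = 0"
    by (simp add: emeasure_nu)
  then have "AE x in lborel. dens x * indicator {a<..<b} x = 0"
    by (subst (asm) nn_integral_0_iff_AE) auto
  then have "AE x in lborel. x \<notin> {a<..<b}"
  proof eventually_elim
    case (elim x)
    show ?case
    proof
      assume x: "x \<in> {a<..<b}"
      then have "g x > 0" unfolding g_def using assms by (intro below_Tp) auto
      then have "dens x > 0" using x assms mean_pos by (auto simp: dens_def)
      with elim x show False by simp
    qed
  qed
  then have "emeasure lborel {a<..<b} = 0"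
    by (subst (asm) AE_iff_measurable[of "{a<..<b}"]) auto
  with assms show False by simp
qed

definition F where "F x = measure (nu_S mu) {..x}"

lemma real_distr_nu: "real_distribution (nu_S mu)"
  by unfold_locales (simp add: sets_nu)

lemma F_cont: "isCont F x"
proof -
  interpret real_distribution "nu_S mu" by (rule real_distr_nu)
  have "isCont (cdf (nu_S mu)) x" using isCont_cdf nu_single by simp
  moreover have "cdf (nu_S mu) = F" by (auto simp: cdf_def F_def)
  ultimately show ?thesis by simp
qed

lemma F_cont_on: "continuous_on A F"
  using F_cont by (simp add: continuous_at_imp_continuous_on)

lemma F_mono: "a \<le> b \<Longrightarrow> F a \<le> F b"
  unfolding F_def by (intro nu.finite_measure_mono) auto

lemma F_split: "a \<le> b \<Longrightarrow> F b = F a + measure (nu_S mu) {a<..b}"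
proof -
  assume "a \<le> b"
  then have "{..b} = {..a} \<union> {a<..b}" by auto
  moreover have "measure (nu_S mu) ({..a} \<union> {a<..b}) = measure (nu_S mu) {..a} + measure (nu_S mu) {a<..b}"
    by (rule nu.finite_measure_Union) auto
  ultimately show ?thesis unfolding F_def by simp
qed

lemma F_strict: "0 \<le> a \<Longrightarrow> a < b \<Longrightarrow> b \<le> Tp \<Longrightarrow> F a < F b"
proof -
  assume *: "0 \<le> a" "a < b" "b \<le> Tp"
  have "measure (nu_S mu) {a<..<b} \<le> measure (nu_S mu) {a<..b}"
    by (intro nu.finite_measure_mono) auto
  with nu_Ioo_pos[OF *] F_split[of a b] * show ?thesis by simp
qed

lemma F_nonpos: "x \<le> 0 \<Longrightarrow> F x = 0"
  using nu_nonpos F_mono[of x 0] unfolding F_def by (simp add: measure_nonneg antisym)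

lemma F_one: "Tp \<le> x \<Longrightarrow> F x = 1"
proof -
  assume x: "Tp \<le> x"
  have "{x<..} = space (nu_S mu) - {..x}" by (auto simp: space_nu)
  then have "measure (nu_S mu) {x<..} = 1 - F x"
    using nu.prob_compl[of "{..x}"] by (simp add: F_def)
  moreover have "measure (nu_S mu) {x<..} \<le> measure (nu_S mu) {Tp<..}"
    using x by (intro nu.finite_measure_mono) auto
  moreover have "F x \<le> 1" unfolding F_def by simp
  ultimately show ?thesis using nu_aboveT by (simp add: measure_nonneg)
qed

lemma F_range: "0 \<le> F x" "F x \<le> 1"
  unfolding F_def by auto

lemma nu_Ioo_0: "0 \<le> t \<Longrightarrow> measure (nu_S mu) {0<..<t} = F t"
proof (cases "t = 0")
  case True then show ?thesis using F_nonpos[of 0] by simp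
next
  case False
  assume t: "0 \<le> t"
  have "measure (nu_S mu) {0<..t} = measure (nu_S mu) ({0<..<t} \<union> {t})"
    using t False by (intro arg_cong[where f="measure _"]) auto
  also have "\<dots> \<le> measure (nu_S mu) {0<..<t} + measure (nu_S mu) {t}"
    by (intro measure_Un_le) auto
  finally have "measure (nu_S mu) {0<..t} \<le> measure (nu_S mu) {0<..<t}"
    using nu_single by simp
  moreover have "measure (nu_S mu) {0<..<t} \<le> measure (nu_S mu) {0<..t}"
    by (intro nu.finite_measure_mono) auto
  ultimately show ?thesis using F_split[OF t] F_nonpos[of 0] by simp
qed

lemma nu_Ioo_T: "x \<le> Tp \<Longrightarrow> measure (nu_S mu) {x<..<Tp} = 1 - F x"
proof (cases "x = Tp")
  case True then show ?thesis using F_one[of Tp] by simp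
next
  case False
  assume x: "x \<le> Tp"
  have "F Tp = F x + measure (nu_S mu) {x<..Tp}" by (rule F_split[OF x])
  have "measure (nu_S mu) {x<..Tp} = measure (nu_S mu) ({x<..<Tp} \<union> {Tp})"
    using x False by (intro arg_cong[where f="measure _"]) auto
  also have "\<dots> \<le> measure (nu_S mu) {x<..<Tp} + measure (nu_S mu) {Tp}"
    by (intro measure_Un_le) auto
  finally have "measure (nu_S mu) {x<..Tp} \<le> measure (nu_S mu) {x<..<Tp}"
    using nu_single by simp
  moreover have "measure (nu_S mu) {x<..<Tp} \<le> measure (nu_S mu) {x<..Tp}"
    by (intro nu.finite_measure_mono) auto
  ultimately show ?thesis using F_split[OF x] F_one[of Tp] by simp
qed


lemma F_surj: "0 \<le> z \<Longrightarrow> z \<le> 1 \<Longrightarrow> \<exists>t. 0 \<le> t \<and> t \<le> Tp \<and> F t = z"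
proof -
  assume z: "0 \<le> z" "z \<le> 1"
  have "F 0 \<le> z" using F_nonpos[of 0] z by simp
  moreover have "z \<le> F Tp" using F_one[of Tp] z by simp
  moreover have "0 \<le> Tp" using Tp_pos by simp
  ultimately show ?thesis using IVT'[of F 0 z Tp, OF _ _ _ F_cont_on] by blast
qed

lemma F_inj: "0 \<le> a \<Longrightarrow> a \<le> Tp \<Longrightarrow> 0 \<le> b \<Longrightarrow> b \<le> Tp \<Longrightarrow> F a = F b \<Longrightarrow> a = b"
proof (rule ccontr)
  assume *: "0 \<le> a" "a \<le> Tp" "0 \<le> b" "b \<le> Tp" "F a = F b" "a \<noteq> b"
  then consider "a < b" | "b < a" by linarith
  then show False
  proof cases
    case 1 then show False using F_strict[of a b] * by simp
  next
    case 2 then show False using F_strict[of b a] * by simp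
  qed
qed

lemma psi_F: assumes "0 \<le> s" "s \<le> Tp" shows "psi_S mu (F s) = s"
proof -
  have F0: "F 0 = 0" by (rule F_nonpos) simp
  have F1: "F Tp = 1" by (rule F_one) simp
  consider "s = 0" | "s = Tp" | "0 < s" "s < Tp" using assms by linarith
  then show ?thesis
  proof cases
    case 1 then show ?thesis using F0 unfolding psi_S_def by simp
  next
    case 2 then show ?thesis using F1 T_S_eq unfolding psi_S_def by simp
  next
    case 3
    have a: "F s > 0" using F_strict[of 0 s] F0 3 by linarith
    have b: "F s < 1" using F_strict[of s Tp] F1 3 by linarith
    have "(THE t. t \<in> {0<..<T_S mu} \<and> measure (nu_S mu) {0<..<t} = F s) = s"
    proof (rule the_equality)
      have "measure (nu_S mu) {0<..<s} = F s" using 3 by (intro nu_Ioo_0) linarith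
      then show "s \<in> {0<..<T_S mu} \<and> measure (nu_S mu) {0<..<s} = F s"
        using 3 unfolding T_S_eq by simp
    next
      fix t assume t: "t \<in> {0<..<T_S mu} \<and> measure (nu_S mu) {0<..<t} = F s"
      then have t1: "0 < t" "t < Tp" unfolding T_S_eq by auto
      then have "measure (nu_S mu) {0<..<t} = F t" by (intro nu_Ioo_0) linarith
      with t have "F t = F s" by simp
      then show "t = s" using F_inj[of t s] 3 t1 by linarith
    qed
    then show ?thesis using a b unfolding psi_S_def by simp
  qed
qed

lemma F_psi: assumes "0 \<le> z" "z \<le> 1"
  shows "F (psi_S mu z) = z" "0 \<le> psi_S mu z" "psi_S mu z \<le> Tp"
proof -
  obtain t where t: "0 \<le> t" "t \<le> Tp" "F t = z" using F_surj[OF assms] by blast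
  then have "psi_S mu z = t" using psi_F[of t] by simp
  then show "F (psi_S mu z) = z" "0 \<le> psi_S mu z" "psi_S mu z \<le> Tp" using t by auto
qed

lemma F_image: "F ` {0..Tp} = {0..1}"
proof
  show "F ` {0..Tp} \<subseteq> {0..1}" using F_range by auto
  show "{0..1} \<subseteq> F ` {0..Tp}"
  proof
    fix z :: real assume "z \<in> {0..1}"
    then obtain t where "0 \<le> t" "t \<le> Tp" "F t = z" using F_surj by auto
    then show "z \<in> F ` {0..Tp}" by force
  qed
qed

lemma psi_cont: "continuous_on {0..1} (psi_S mu)"
proof -
  have "continuous_on (F ` {0..Tp}) (psi_S mu)"
    by (rule continuous_on_inv[OF F_cont_on compact_Icc]) (simp add: psi_F)
  then show ?thesis by (simp add: F_image)
qed

lemma psi_ucont: "uniformly_continuous_on {0..1} (psi_S mu)"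
  by (rule compact_uniformly_continuous[OF psi_cont compact_Icc])

end



lemma sr_count_pos_iff: "sr_count Y s > 0 \<longleftrightarrow> (\<exists>n. 1 \<le> n \<and> (\<Sum>j<n. Y j) \<le> s)"
proof -
  define S where "S = {k::nat. 1 \<le> k \<and> (\<Sum>j<k. Y j) \<le> s}"
  have sc: "sr_count Y s = (if finite S then enat (card S) else \<infinity>)"
    by (simp add: sr_count_def S_def Let_def)
  show ?thesis
  proof (cases "finite S")
    case True
    then have "sr_count Y s > 0 \<longleftrightarrow> S \<noteq> {}" using sc by (auto simp: zero_enat_def card_gt_0_iff)
    then show ?thesis by (auto simp: S_def)
  next
    case False
    then have "S \<noteq> {}" by auto
    then show ?thesis using sc False by (auto simp: S_def)
  qed
qed

lemma sr_count_min: "min (sr_count Y s) 1 = (if \<exists>n. 1 \<le> n \<and> (\<Sum>j<n. Y j) \<le> s then 1 else 0)"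
proof (cases "sr_count Y s > 0")
  case True
  then have "sr_count Y s \<ge> 1"
    by (metis Suc_ile_eq one_eSuc zero_less_iff_neq_zero ileI1 eSuc_enat zero_enat_def)
  then show ?thesis using True sr_count_pos_iff[of Y s] by (simp add: min_def)
next
  case False
  then show ?thesis using sr_count_pos_iff[of Y s] by (simp add: min_def)
qed

lemma exists_sum_iff:
  fixes Y :: "nat \<Rightarrow> real"
  assumes "\<And>k. Y (Suc k) \<ge> 0"
  shows "(\<exists>n. 1 \<le> n \<and> (\<Sum>j<n. Y j) \<le> s) \<longleftrightarrow> Y 0 \<le> s"
proof
  assume "\<exists>n. 1 \<le> n \<and> (\<Sum>j<n. Y j) \<le> s"
  then obtain n where n: "1 \<le> n" "(\<Sum>j<n. Y j) \<le> s" by blast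
  then obtain m where m: "n = Suc m" by (cases n) auto
  have "(\<Sum>j<n. Y j) = Y 0 + (\<Sum>j<m. Y (Suc j))"
    unfolding m by (rule sum.lessThan_Suc_shift)
  moreover have "(\<Sum>j<m. Y (Suc j)) \<ge> 0" by (intro sum_nonneg assms)
  ultimately show "Y 0 \<le> s" using n by linarith
next
  assume "Y 0 \<le> s"
  then show "\<exists>n. 1 \<le> n \<and> (\<Sum>j<n. Y j) \<le> s" by (intro exI[of _ 1]) simp
qed

definition Cq :: "(int \<Rightarrow> bool) \<Rightarrow> int set" where
  "Cq q = {j. \<forall>l. min 0 j \<le> l \<and> l \<le> max 0 j \<longrightarrow> q l}"

lemma Cblock_if: "Cblock (\<lambda>i. if q i then (1::enat) else 0) 0 = (if q 0 then Cq q else {})"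
  by (auto simp: Cblock_def Cq_def)

definition pat :: "(int \<Rightarrow> bool) \<Rightarrow> nat \<Rightarrow> int \<Rightarrow> bool" where
  "pat q k a \<longleftrightarrow> \<not> q (a - 1) \<and> (\<forall>l\<in>{a..a + int k - 1}. q l) \<and> \<not> q (a + int k)"

lemma pat_unique:
  assumes "a \<in> {1 - int k..0}" "b \<in> {1 - int k..0}" "pat q k a" "pat q k b"
  shows "a = b"
proof (rule ccontr)
  assume "a \<noteq> b"
  then consider "a < b" | "b < a" by linarith
  then show False
  proof cases
    case 1
    then have "b - 1 \<in> {a..a + int k - 1}" using assms(1,2) by auto
    then show False using assms(3,4) unfolding pat_def by blast
  next
    case 2
    then have "a - 1 \<in> {b..b + int k - 1}" using assms(1,2) by auto
    then show False using assms(3,4) unfolding pat_def by blast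
  qed
qed

lemma block_char:
  assumes k: "k \<ge> 1"
  shows "(q 0 \<and> finite (Cq q) \<and> card (Cq q) = k) \<longleftrightarrow> (\<exists>a\<in>{1 - int k..0}. pat q k a)"
proof
  assume "\<exists>a\<in>{1 - int k..0}. pat q k a"
  then obtain a where a: "a \<in> {1 - int k..0}" "pat q k a" by blast
  have eq: "Cq q = {a..a + int k - 1}"
  proof
    show "Cq q \<subseteq> {a..a + int k - 1}"
    proof
      fix j assume j: "j \<in> Cq q"
      show "j \<in> {a..a + int k - 1}"
      proof (rule ccontr)
        assume "j \<notin> {a..a + int k - 1}"
        then consider "j < a" | "j > a + int k - 1" by auto
        then show False
        proof cases
          case 1
          then have "min 0 j \<le> a - 1 \<and> a - 1 \<le> max 0 j" using a(1) by auto
          then have "q (a - 1)" using j unfolding Cq_def by blast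
          then show False using a(2) unfolding pat_def by blast
        next
          case 2
          then have "min 0 j \<le> a + int k \<and> a + int k \<le> max 0 j" using a(1) by auto
          then have "q (a + int k)" using j unfolding Cq_def by blast
          then show False using a(2) unfolding pat_def by blast
        qed
      qed
    qed
  next
    show "{a..a + int k - 1} \<subseteq> Cq q"
    proof
      fix j assume j: "j \<in> {a..a + int k - 1}"
      have "q l" if "min 0 j \<le> l" "l \<le> max 0 j" for l
      proof -
        have "l \<in> {a..a + int k - 1}" using that j a(1) by auto
        then show ?thesis using a(2) unfolding pat_def by blast
      qed
      then show "j \<in> Cq q" unfolding Cq_def by blast
    qed
  qed
  have "0 \<in> {a..a + int k - 1}" using a(1) by auto
  then have "q 0" using a(2) unfolding pat_def by blast
  moreover have "card (Cq q) = k" unfolding eq by simp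
  ultimately show "q 0 \<and> finite (Cq q) \<and> card (Cq q) = k" unfolding eq by simp
next
  assume H: "q 0 \<and> finite (Cq q) \<and> card (Cq q) = k"
  then have fin: "finite (Cq q)" and q0: "q 0" and ck: "card (Cq q) = k" by auto
  have inC: "0 \<in> Cq q" using q0 unfolding Cq_def by auto
  then have ne: "Cq q \<noteq> {}" by auto
  define a where "a = Min (Cq q)"
  define b where "b = Max (Cq q)"
  have aC: "a \<in> Cq q" unfolding a_def using fin ne by simp
  have bC: "b \<in> Cq q" unfolding b_def using fin ne by simp
  have a0: "a \<le> 0" unfolding a_def using fin inC by simp
  have b0: "b \<ge> 0" unfolding b_def using fin inC by simp
  have amin: "a \<le> j" if "j \<in> Cq q" for j unfolding a_def using fin that by simp
  have bmax: "j \<le> b" if "j \<in> Cq q" for j unfolding b_def using fin that by simp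
  have qa: "q l" if "a \<le> l" "l \<le> 0" for l
    using aC that a0 unfolding Cq_def by auto
  have qb: "q l" if "0 \<le> l" "l \<le> b" for l
    using bC that b0 unfolding Cq_def by auto
  have eq: "Cq q = {a..b}"
  proof
    show "Cq q \<subseteq> {a..b}" using amin bmax by auto
  next
    show "{a..b} \<subseteq> Cq q"
    proof
      fix j assume j: "j \<in> {a..b}"
      have "q l" if "min 0 j \<le> l" "l \<le> max 0 j" for l
      proof (cases "l \<le> 0")
        case True
        have "a \<le> l" using that j a0 by (auto simp: min_def split: if_splits)
        then show ?thesis using qa True by blast
      next
        case False
        have "l \<le> b" using that j b0 by (auto simp: max_def split: if_splits)
        then show ?thesis using qb False by simp
      qed
      then show "j \<in> Cq q" unfolding Cq_def by blast
    qed
  qed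
  have na: "\<not> q (a - 1)"
  proof
    assume "q (a - 1)"
    then have "q l" if "a - 1 \<le> l" "l \<le> 0" for l
      using qa that by (cases "l = a - 1") auto
    then have "a - 1 \<in> Cq q" using a0 unfolding Cq_def by auto
    then show False using amin[of "a - 1"] by simp
  qed
  have nb: "\<not> q (b + 1)"
  proof
    assume "q (b + 1)"
    then have "q l" if "0 \<le> l" "l \<le> b + 1" for l
      using qb that by (cases "l = b + 1") auto
    then have "b + 1 \<in> Cq q" using b0 unfolding Cq_def by auto
    then show False using bmax[of "b + 1"] by simp
  qed
  have "card {a..b} = k" using ck eq by simp
  then have bk: "b = a + int k - 1" using a0 b0 by (simp add: nat_eq_iff)
  show "\<exists>a\<in>{1 - int k..0}. pat q k a"
  proof (intro bexI[of _ a])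
    show "a \<in> {1 - int k..0}" using a0 b0 bk by simp
    show "pat q k a" unfolding pat_def using na nb bk eq qa qb
      by (auto simp: Cq_def) (metis (full_types) linorder_le_cases)
  qed
qed

definition Pk :: "(int \<Rightarrow> bool) \<Rightarrow> nat \<Rightarrow> bool" where
  "Pk q k \<longleftrightarrow> (if k = 0 then \<not> q 0 else \<exists>a\<in>{1 - int k..0}. pat q k a)"

lemma cblock_event:
  "(finite (Cblock (\<lambda>i. if q i then (1::enat) else 0) 0) \<and>
     card (Cblock (\<lambda>i. if q i then (1::enat) else 0) 0) = k) \<longleftrightarrow> Pk q k"
proof (cases "k = 0")
  case True
  have "0 \<in> Cq q" if "q 0" using that by (auto simp: Cq_def)
  then show ?thesis using True by (auto simp: Cblock_if Pk_def card_gt_0_iff)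
next
  case False
  then have k: "k \<ge> 1" by simp
  show ?thesis
  proof (cases "q 0")
    case True
    then show ?thesis using block_char[OF k, of q] False by (simp add: Cblock_if Pk_def)
  next
    case nq: False
    have "\<not> pat q k a" if "a \<in> {1 - int k..0}" for a
    proof
      assume "pat q k a"
      moreover have "0 \<in> {a..a + int k - 1}" using that by auto
      ultimately show False using nq unfolding pat_def by blast
    qed
    then show ?thesis using nq False by (auto simp: Cblock_if Pk_def)
  qed
qed




locale full_setting = mu_setting mu for mu +
  fixes M :: "'a measure" and Z :: "int \<Rightarrow> nat \<Rightarrow> 'a \<Rightarrow> real"
  assumes M_prob: "prob_space M"
    and Z_indep: "prob_space.indep_vars M (\<lambda>_. borel) (\<lambda>(i, k). Z i k) UNIV"
    and Z_first: "\<And>i. distr M borel (Z i 0) = nu_S mu"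
    and Z_incr: "\<And>i k. distr M borel (Z i (Suc k)) = mu"
begin

interpretation M: prob_space M by (rule M_prob)

lemma Z_meas[measurable]: "Z i k \<in> borel_measurable M"
proof -
  have "(\<lambda>(i, k). Z i k) (i, k) \<in> borel_measurable M"
    using Z_indep unfolding M.indep_vars_def2 by blast
  then show ?thesis by simp
qed

lemma nu_prob: "prob_space (nu_S mu)"
proof -
  have "prob_space (distr M borel (Z 0 0))" by (rule M.prob_space_distr) simp
  then show ?thesis by (simp only: Z_first)
qed

sublocale nu_setting mu by (intro nu_setting.intro mu_setting_axioms nu_setting_axioms.intro nu_prob)

interpretation mu: prob_space mu by (rule mu_prob)
interpretation nu: prob_space "nu_S mu" by (rule nu_prob)

lemma prob_Z0_le: "M.prob {\<omega>\<in>space M. Z i 0 \<omega> \<le> s} = F s"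
proof -
  have "F s = measure (distr M borel (Z i 0)) {..s}" unfolding F_def Z_first ..
  also have "\<dots> = measure M (Z i 0 -` {..s} \<inter> space M)" by (rule measure_distr) auto
  also have "Z i 0 -` {..s} \<inter> space M = {\<omega>\<in>space M. Z i 0 \<omega> \<le> s}" by auto
  finally show ?thesis by simp
qed

lemma prob_Z0_gt: "M.prob {\<omega>\<in>space M. \<not> Z i 0 \<omega> \<le> s} = 1 - F s"
proof -
  have "{\<omega>\<in>space M. \<not> Z i 0 \<omega> \<le> s} = space M - {\<omega>\<in>space M. Z i 0 \<omega> \<le> s}" by auto
  then show ?thesis using M.prob_compl[of "{\<omega>\<in>space M. Z i 0 \<omega> \<le> s}"] prob_Z0_le[of i s] by simp
qed

lemma AE_mu_pos: "AE x in mu. x > 0"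
proof -
  have "{x\<in>space mu. \<not> 0 < x} = {..0}" by (auto simp: space_mu)
  then show ?thesis using mu_pos by (subst AE_iff_measurable[of "{..0}"]) auto
qed

lemma AE_Z_pos: "AE \<omega> in M. \<forall>i k. Z i (Suc k) \<omega> > 0"
proof -
  have "AE \<omega> in M. Z i (Suc k) \<omega> > 0" for i k
  proof -
    have "AE x in distr M borel (Z i (Suc k)). x > 0" unfolding Z_incr by (rule AE_mu_pos)
    then show ?thesis by (rule AE_distrD[OF Z_meas])
  qed
  then show ?thesis by (simp add: AE_all_countable)
qed

lemma indep_Z0: "M.indep_vars (\<lambda>_. borel) (\<lambda>i. Z i 0) UNIV"
  unfolding M.indep_vars_def2
proof (intro conjI ballI)
  show "Z i 0 \<in> borel_measurable M" for i by simp
  have big: "M.indep_sets (\<lambda>p. {(\<lambda>(i, k). Z i k) p -` A \<inter> space M |A. A \<in> sets borel}) UNIV"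
    using Z_indep unfolding M.indep_vars_def2 by simp
  show "M.indep_sets (\<lambda>i. {Z i 0 -` A \<inter> space M |A. A \<in> sets borel}) UNIV"
    unfolding M.indep_sets_def
  proof (intro conjI allI impI ballI)
    fix i :: int
    show "{Z i 0 -` A \<inter> space M |A. A \<in> sets borel} \<subseteq> M.events" by auto
  next
    fix J :: "int set" and A
    assume J: "J \<subseteq> UNIV" "J \<noteq> {}" "finite J"
      and A: "A \<in> Pi J (\<lambda>i. {Z i 0 -` A \<inter> space M |A. A \<in> sets borel})"
    let ?J = "(\<lambda>i. (i, 0::nat)) ` J"
    have inj: "inj_on (\<lambda>i. (i, 0::nat)) J" by (auto simp: inj_on_def)
    have "M.prob (\<Inter>p\<in>?J. A (fst p)) = (\<Prod>p\<in>?J. M.prob (A (fst p)))"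
    proof (rule M.indep_setsD[OF big])
      show "\<forall>p\<in>?J. A (fst p) \<in> {(\<lambda>(i, k). Z i k) p -` A \<inter> space M |A. A \<in> sets borel}"
        using A by auto
    qed (use J in auto)
    moreover have "(\<Inter>p\<in>?J. A (fst p)) = (\<Inter>j\<in>J. A j)" by auto
    moreover have "(\<Prod>p\<in>?J. M.prob (A (fst p))) = (\<Prod>j\<in>J. M.prob (A j))"
      by (subst prod.reindex[OF inj]) simp
    ultimately show "M.prob (\<Inter>j\<in>J. A j) = (\<Prod>j\<in>J. M.prob (A j))" by simp
  qed
qed

lemma prob_inter_Z0:
  assumes "finite J" "J \<noteq> {}" "\<And>i. i \<in> J \<Longrightarrow> B i \<in> sets borel"
  shows "M.prob (\<Inter>i\<in>J. Z i 0 -` B i \<inter> space M) = (\<Prod>i\<in>J. M.prob (Z i 0 -` B i \<inter> space M))"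
proof (rule M.indep_setsD)
  show "M.indep_sets (\<lambda>i. {Z i 0 -` A \<inter> space M |A. A \<in> sets borel}) UNIV"
    using indep_Z0 unfolding M.indep_vars_def2 by simp
qed (use assms in auto)

end



context full_setting begin
interpretation M: prob_space M by (rule M_prob)
interpretation mu: prob_space mu by (rule mu_prob)
interpretation nu: prob_space "nu_S mu" by (rule nu_prob)

lemma pred_Q[measurable]: "Measurable.pred M (\<lambda>\<omega>. \<exists>n. 1 \<le> n \<and> (\<Sum>j<n. Z i j \<omega>) \<le> s)"
  by measurable

lemma pred_R[measurable]: "Measurable.pred M (\<lambda>\<omega>. Z i 0 \<omega> \<le> s)"
  by measurable

lemma pred_Pk: 
  assumes [measurable]: "\<And>i. Measurable.pred M (q i)"
  shows "Measurable.pred M (\<lambda>\<omega>. Pk (\<lambda>i. q i \<omega>) k)"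
  unfolding Pk_def pat_def by measurable


lemma prob_pat:
  assumes k: "k \<ge> 1"
  shows "M.prob {\<omega>\<in>space M. pat (\<lambda>i. Z i 0 \<omega> \<le> s) k a} = F s ^ k * (1 - F s)^2"
proof -
  define Rg where "Rg = {a..a + int k - 1}"
  define J where "J = insert (a - 1) (insert (a + int k) Rg)"
  define D where "D l = (if l \<in> Rg then {..s} else {s<..})" for l
  have fin: "finite J" "J \<noteq> {}" by (auto simp: J_def Rg_def)
  have eq: "{\<omega>\<in>space M. pat (\<lambda>i. Z i 0 \<omega> \<le> s) k a} = (\<Inter>l\<in>J. Z l 0 -` D l \<inter> space M)"
    using k by (auto simp: pat_def J_def D_def Rg_def not_le)
  have pD: "M.prob (Z l 0 -` D l \<inter> space M) = (if l \<in> Rg then F s else 1 - F s)" for l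
  proof (cases "l \<in> Rg")
    case True
    have "Z l 0 -` D l \<inter> space M = {\<omega>\<in>space M. Z l 0 \<omega> \<le> s}" using True by (auto simp: D_def)
    then show ?thesis using True prob_Z0_le by simp
  next
    case False
    have "Z l 0 -` D l \<inter> space M = {\<omega>\<in>space M. \<not> Z l 0 \<omega> \<le> s}" using False by (auto simp: D_def)
    then show ?thesis using False prob_Z0_gt by simp
  qed
  have "M.prob {\<omega>\<in>space M. pat (\<lambda>i. Z i 0 \<omega> \<le> s) k a} = (\<Prod>l\<in>J. M.prob (Z l 0 -` D l \<inter> space M))"
    unfolding eq by (rule prob_inter_Z0[OF fin]) (auto simp: D_def)
  also have "\<dots> = (\<Prod>l\<in>J. (if l \<in> Rg then F s else 1 - F s))" by (simp add: pD)
  also have "\<dots> = (1 - F s) * ((1 - F s) * (\<Prod>l\<in>Rg. (if l \<in> Rg then F s else 1 - F s)))"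
    unfolding J_def using k by (simp add: Rg_def)
  also have "(\<Prod>l\<in>Rg. (if l \<in> Rg then F s else 1 - F s)) = F s ^ k"
    by (simp add: Rg_def)
  finally show ?thesis by (simp add: power2_eq_square)
qed

theorem part2:
  assumes t: "t \<ge> 0"
  shows "measure M {\<omega> \<in> space M.
            finite (Cblock (\<lambda>i. min (sr_count (\<lambda>j. Z i j \<omega>) (T_S mu * t)) 1) 0)
            \<and> card (Cblock (\<lambda>i. min (sr_count (\<lambda>j. Z i j \<omega>) (T_S mu * t)) 1) 0) = k}
        = q_S mu k (min t 1)"
proof -
  define s where "s = T_S mu * t"
  define p where "p = F s"
  let ?Q = "\<lambda>i \<omega>. \<exists>n. 1 \<le> n \<and> (\<Sum>j<n. Z i j \<omega>) \<le> s"
  let ?R = "\<lambda>i \<omega>. Z i 0 \<omega> \<le> s"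
  have E1: "{\<omega> \<in> space M.
            finite (Cblock (\<lambda>i. min (sr_count (\<lambda>j. Z i j \<omega>) (T_S mu * t)) 1) 0)
            \<and> card (Cblock (\<lambda>i. min (sr_count (\<lambda>j. Z i j \<omega>) (T_S mu * t)) 1) 0) = k}
       = {\<omega>\<in>space M. Pk (\<lambda>i. ?Q i \<omega>) k}"
    unfolding s_def[symmetric] sr_count_min cblock_event ..
  have AE: "AE \<omega> in M. (\<omega> \<in> {\<omega>\<in>space M. Pk (\<lambda>i. ?Q i \<omega>) k}) \<longleftrightarrow> (\<omega> \<in> {\<omega>\<in>space M. Pk (\<lambda>i. ?R i \<omega>) k})"
    using AE_Z_pos
  proof eventually_elim
    case (elim \<omega>)
    have "(\<lambda>i. ?Q i \<omega>) = (\<lambda>i. ?R i \<omega>)"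
    proof
      fix i show "?Q i \<omega> = ?R i \<omega>"
        by (rule exists_sum_iff[of "\<lambda>j. Z i j \<omega>"]) (use elim in \<open>auto intro: less_imp_le\<close>)
    qed
    then show ?case by simp
  qed
  have m1: "{\<omega>\<in>space M. Pk (\<lambda>i. ?Q i \<omega>) k} \<in> sets M"
    using pred_Pk[of ?Q k] by (simp add: pred_def)
  have m2: "{\<omega>\<in>space M. Pk (\<lambda>i. ?R i \<omega>) k} \<in> sets M"
    using pred_Pk[of ?R k] by (simp add: pred_def)
  have main: "M.prob {\<omega>\<in>space M. Pk (\<lambda>i. ?R i \<omega>) k}
      = (if k = 0 then 1 - p else real k * (1 - p)^2 * p ^ k)"
  proof (cases "k = 0")
    case True
    then show ?thesis using prob_Z0_gt[of 0 s] by (simp add: Pk_def p_def)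
  next
    case False
    then have k: "k \<ge> 1" by simp
    define B where "B a = {\<omega>\<in>space M. pat (\<lambda>i. Z i 0 \<omega> \<le> s) k a}" for a
    have "{\<omega>\<in>space M. Pk (\<lambda>i. ?R i \<omega>) k} = (\<Union>a\<in>{1 - int k..0}. B a)"
      using False by (auto simp: Pk_def B_def)
    moreover have "M.prob (\<Union>a\<in>{1 - int k..0}. B a) = (\<Sum>a\<in>{1 - int k..0}. M.prob (B a))"
    proof (rule measure_finite_Union)
      have "B a \<in> M.events" for a
        unfolding B_def pat_def by measurable
      then show "B ` {1 - int k..0} \<subseteq> M.events" by blast
      show "disjoint_family_on B {1 - int k..0}"
        unfolding disjoint_family_on_def B_def using pat_unique by blast
    qed (auto simp: M.emeasure_eq_measure)
    moreover have "M.prob (B a) = p ^ k * (1 - p)^2" for a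
      unfolding B_def p_def by (rule prob_pat[OF k])
    ultimately show ?thesis using False by simp
  qed
  have zT: "min t 1 * T_S mu = min s Tp"
    unfolding s_def T_S_eq using Tp_pos by (simp add: min_def)
  have Fz: "F (min s Tp) = p"
  proof (cases "s \<le> Tp")
    case True then show ?thesis by (simp add: p_def)
  next
    case False then show ?thesis using F_one[of s] F_one[of Tp] by (simp add: p_def)
  qed
  have s0: "0 \<le> min s Tp" unfolding s_def T_S_eq using Tp_pos t by simp
  have q1: "measure (nu_S mu) {min t 1 * T_S mu<..<T_S mu} = 1 - p"
    unfolding zT using nu_Ioo_T[of "min s Tp"] Fz by (simp add: T_S_eq)
  have q2: "measure (nu_S mu) {0<..<min t 1 * T_S mu} = p"
    unfolding zT using nu_Ioo_0[OF s0] Fz by simp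
  show ?thesis
    unfolding E1 measure_eq_AE[OF AE m1 m2] main q_S_def q1 q2 by simp
qed

end



context full_setting begin
interpretation M: prob_space M by (rule M_prob)

definition avg where
  "avg m s \<omega> = real (card {i\<in>{- int m..int m}. Z i 0 \<omega> \<le> s}) / real (2 * m + 1)"

lemma avg_range: "0 \<le> avg m s \<omega>" "avg m s \<omega> \<le> 1"
proof -
  have "card {i\<in>{- int m..int m}. Z i 0 \<omega> \<le> s} \<le> card {- int m..int m}"
    by (intro card_mono) auto
  also have "card {- int m..int m} = 2 * m + 1" by simp
  finally show "avg m s \<omega> \<le> 1" unfolding avg_def by (simp add: divide_le_eq_1)
qed (simp add: avg_def)

lemma avg_mono: "s \<le> s' \<Longrightarrow> avg m s \<omega> \<le> avg m s' \<omega>"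
proof -
  assume "s \<le> s'"
  have fin: "finite {i\<in>{- int m..int m}. Z i 0 \<omega> \<le> s'}" by (rule finite_subset[of _ "{- int m..int m}"]) auto
  have "card {i\<in>{- int m..int m}. Z i 0 \<omega> \<le> s} \<le> card {i\<in>{- int m..int m}. Z i 0 \<omega> \<le> s'}"
    using \<open>s \<le> s'\<close> by (intro card_mono[OF fin]) auto
  then show ?thesis unfolding avg_def by (intro divide_right_mono) auto
qed

lemma hoeff_bound:
  assumes eps: "\<epsilon> > 0"
  shows "M.prob {\<omega>\<in>space M. \<epsilon> \<le> \<bar>avg m s \<omega> - F s\<bar>} \<le> 2 * exp (-2 * \<epsilon>\<^sup>2 * real (2 * m + 1))"
proof -
  define I where "I = {- int m..int m}"
  define X where "X i \<omega> = (of_bool (Z i 0 \<omega> \<le> s) :: real)" for i \<omega>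
  define n where "n = real (2 * m + 1)"
  have cardI: "card I = 2 * m + 1" unfolding I_def by simp
  have n0: "n > 0" unfolding n_def by simp
  have indep: "M.indep_vars (\<lambda>_. borel) X I"
  proof -
    have "M.indep_vars (\<lambda>_. borel) (\<lambda>i. Z i 0) I"
      by (rule M.indep_vars_subset[OF indep_Z0]) simp
    then have "M.indep_vars (\<lambda>_. borel) (\<lambda>i x. (\<lambda>y. of_bool (y \<le> s) :: real) (Z i 0 x)) I"
      by (rule M.indep_vars_compose2) simp
    then show ?thesis unfolding X_def by simp
  qed
  have EX: "M.expectation (X i) = F s" for i
  proof -
    have "X i = indicator {\<omega>. Z i 0 \<omega> \<le> s}" by (auto simp: X_def indicator_def)
    then have "M.expectation (X i) = measure M ({\<omega>. Z i 0 \<omega> \<le> s} \<inter> space M)" by simp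
    also have "{\<omega>. Z i 0 \<omega> \<le> s} \<inter> space M = {\<omega>\<in>space M. Z i 0 \<omega> \<le> s}" by auto
    finally show ?thesis using prob_Z0_le by simp
  qed
  interpret H: Hoeffding_ineq M I X "\<lambda>_. 0" "\<lambda>_. 1" "n * F s"
  proof unfold_locales
    show "finite I" unfolding I_def by simp
    show "M.indep_vars (\<lambda>_. borel) X I" by (rule indep)
    show "AE x in M. X i x \<in> {0..1}" for i by (auto simp: X_def)
    show "n * F s \<equiv> \<Sum>i\<in>I. M.expectation (X i)" by (simp add: EX cardI n_def)
  qed
  have en: "\<epsilon> * n \<ge> 0" using eps n0 by simp
  have "M.prob {x\<in>space M. \<bar>(\<Sum>i\<in>I. X i x) - n * F s\<bar> \<ge> \<epsilon> * n}
        \<le> 2 * exp (-2 * (\<epsilon> * n)\<^sup>2 / (\<Sum>i\<in>I. (1 - 0)\<^sup>2))"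
    by (rule H.Hoeffding_ineq_abs_ge[OF en]) (simp add: cardI I_def)
  also have "(\<Sum>i\<in>I. (1 - 0 :: real)\<^sup>2) = n" by (simp add: cardI n_def)
  also have "-2 * (\<epsilon> * n)\<^sup>2 / n = -2 * \<epsilon>\<^sup>2 * n" using n0 by (simp add: power2_eq_square)
  also have "{x\<in>space M. \<bar>(\<Sum>i\<in>I. X i x) - n * F s\<bar> \<ge> \<epsilon> * n}
      = {\<omega>\<in>space M. \<epsilon> \<le> \<bar>avg m s \<omega> - F s\<bar>}"
  proof (intro Collect_cong conj_cong refl)
    fix \<omega>
    have sumX: "(\<Sum>i\<in>I. X i \<omega>) = real (card {i\<in>{- int m..int m}. Z i 0 \<omega> \<le> s})"
      unfolding X_def I_def by (simp add: Int_def)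
    have "avg m s \<omega> - F s = ((\<Sum>i\<in>I. X i \<omega>) - n * F s) / n"
      unfolding avg_def sumX n_def[symmetric] using n0 by (simp add: field_simps)
    then have "\<bar>avg m s \<omega> - F s\<bar> = \<bar>(\<Sum>i\<in>I. X i \<omega>) - n * F s\<bar> / n" using n0 by simp
    then show "(\<bar>(\<Sum>i\<in>I. X i \<omega>) - n * F s\<bar> \<ge> \<epsilon> * n) = (\<epsilon> \<le> \<bar>avg m s \<omega> - F s\<bar>)"
      using n0 by (simp add: le_divide_eq)
  qed
  finally show ?thesis unfolding n_def .
qed


lemma avg_alt: "avg m s \<omega> = (\<Sum>i\<in>{- int m..int m}. (of_bool (Z i 0 \<omega> \<le> s) :: real)) / real (2 * m + 1)"
  unfolding avg_def by (simp add: Int_def)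

lemma avg_meas[measurable]: "(\<lambda>\<omega>. avg m s \<omega>) \<in> borel_measurable M"
  unfolding avg_alt by measurable

lemma summable_exp_bound:
  assumes "c > 0"
  shows "summable (\<lambda>m::nat. 2 * exp (-2 * c * real (2 * m + 1)))"
proof -
  have eq: "2 * exp (-2 * c * real (2 * m + 1)) = 2 * exp (-2 * c) * (exp (-4 * c)) ^ m" for m :: nat
  proof -
    have "-2 * c * real (2 * m + 1) = real m * (-4 * c) + (-2 * c)" by (simp add: algebra_simps)
    then have "exp (-2 * c * real (2 * m + 1)) = exp (real m * (-4 * c) + (-2 * c))"
      by simp
    also have "\<dots> = exp (real m * (-4 * c)) * exp (-2 * c)" by (rule exp_add)
    finally have "exp (-2 * c * real (2 * m + 1)) = exp (real m * (-4 * c)) * exp (-2 * c)" .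
    moreover have "exp (real m * (-4 * c)) = exp (-4 * c) ^ m" by (rule exp_of_nat_mult)
    ultimately show ?thesis by simp
  qed
  have "norm (exp (-4 * c)) < 1" using assms by simp
  then have "summable (\<lambda>m::nat. 2 * exp (-2 * c) * (exp (-4 * c)) ^ m)"
    by (intro summable_mult summable_geometric)
  then show ?thesis unfolding eq .
qed

lemma AE_avg_eventually:
  assumes eps: "\<epsilon> > 0"
  shows "AE \<omega> in M. eventually (\<lambda>m. \<bar>avg m s \<omega> - F s\<bar> < \<epsilon>) sequentially"
proof -
  define A where "A m = {\<omega>\<in>space M. \<epsilon> \<le> \<bar>avg m s \<omega> - F s\<bar>}" for m
  have Am[measurable]: "A m \<in> sets M" for m unfolding A_def by measurable
  have "summable (\<lambda>m. M.prob (A m))"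
  proof (rule summable_comparison_test'[OF summable_exp_bound[of "\<epsilon>\<^sup>2"]])
    show "\<epsilon>\<^sup>2 > 0" using eps by simp
    show "norm (M.prob (A m)) \<le> 2 * exp (-2 * \<epsilon>\<^sup>2 * real (2 * m + 1))" for m
      using hoeff_bound[OF eps, of m s] unfolding A_def by (simp add: mult.assoc)
  qed
  then have "AE \<omega> in M. eventually (\<lambda>m. \<omega> \<in> space M - A m) sequentially"
    by (intro borel_cantelli_AE1) (auto simp: M.emeasure_eq_measure)
  then show ?thesis
    by (rule AE_mp) (auto simp: A_def elim!: eventually_mono intro!: AE_I2)
qed

lemma AE_avg_conv: "AE \<omega> in M. (\<lambda>m. avg m s \<omega>) \<longlonglongrightarrow> F s"
proof -
  have "AE \<omega> in M. \<forall>j::nat. eventually (\<lambda>m. \<bar>avg m s \<omega> - F s\<bar> < 1 / Suc j) sequentially"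
    by (subst AE_all_countable) (auto intro: AE_avg_eventually)
  then show ?thesis
  proof eventually_elim
    case (elim \<omega>)
    show ?case
    proof (rule tendstoI)
      fix e :: real assume "e > 0"
      then obtain j where j: "1 / Suc j < e" using nat_approx_posE by blast
      show "eventually (\<lambda>m. dist (avg m s \<omega>) (F s) < e) sequentially"
        using elim[rule_format, of j] by eventually_elim (use j in \<open>auto simp: dist_real_def\<close>)
    qed
  qed
qed

end

context nu_setting begin

lemma GC:
  fixes G :: "nat \<Rightarrow> real \<Rightarrow> real"
  assumes mono: "\<And>m s s'. s \<le> s' \<Longrightarrow> G m s \<le> G m s'"
    and le1: "\<And>m s. G m s \<le> 1"
    and conv: "\<And>j N. (\<lambda>m. G m (Tp * real j / real (Suc N))) \<longlonglongrightarrow> F (Tp * real j / real (Suc N))"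
    and d: "\<delta> > 0"
  shows "eventually (\<lambda>m. \<forall>s\<ge>0. \<bar>G m s - F s\<bar> < \<delta>) sequentially"
proof -
  have uc: "uniformly_continuous_on {0..Tp} F"
    by (rule compact_uniformly_continuous[OF F_cont_on compact_Icc])
  obtain \<eta> where \<eta>: "\<eta> > 0"
    and \<eta>F: "\<And>x x'. x \<in> {0..Tp} \<Longrightarrow> x' \<in> {0..Tp} \<Longrightarrow> dist x' x < \<eta> \<Longrightarrow> dist (F x') (F x) < \<delta> / 2"
    using uc d unfolding uniformly_continuous_on_def by (metis half_gt_zero)
  obtain N :: nat where N: "Tp / \<eta> < real N" using reals_Archimedean2 by blast
  have TpN: "Tp / real (Suc N) < \<eta>"
  proof -
    have "Tp < \<eta> * real N" using N \<eta> by (simp add: divide_less_eq mult.commute)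
    also have "\<dots> \<le> \<eta> * real (Suc N)" using \<eta> by simp
    finally show ?thesis by (simp add: divide_less_eq mult.commute)
  qed
  define g where "g j = Tp * real j / real (Suc N)" for j :: nat
  have gin: "g j \<in> {0..Tp}" if "j \<le> Suc N" for j
    using that Tp_pos unfolding g_def by (auto simp: divide_le_eq)
  have gSN: "g (Suc N) = Tp" unfolding g_def by simp
  have gdist: "g (Suc j) - g j = Tp / real (Suc N)" for j
  proof -
    have "g (Suc j) - g j = (Tp * real (Suc j) - Tp * real j) / real (Suc N)"
      unfolding g_def by (simp add: diff_divide_distrib)
    also have "Tp * real (Suc j) - Tp * real j = Tp" by (simp add: algebra_simps)
    finally show ?thesis .
  qed
  have ev: "eventually (\<lambda>m. \<forall>j\<in>{..Suc N}. \<bar>G m (g j) - F (g j)\<bar> < \<delta> / 2) sequentially"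
  proof (rule eventually_ball_finite)
    show "finite {..Suc N}" by simp
    show "\<forall>j\<in>{..Suc N}. eventually (\<lambda>m. \<bar>G m (g j) - F (g j)\<bar> < \<delta> / 2) sequentially"
    proof
      fix j
      have "(\<lambda>m. G m (g j)) \<longlonglongrightarrow> F (g j)" unfolding g_def by (rule conv)
      then show "eventually (\<lambda>m. \<bar>G m (g j) - F (g j)\<bar> < \<delta> / 2) sequentially"
        using d by (auto dest: tendstoD[where e="\<delta>/2"] simp: dist_real_def)
    qed
  qed
  show ?thesis
    using ev
  proof eventually_elim
    case (elim m)
    show ?case
    proof (intro allI impI)
      fix s :: real assume s0: "0 \<le> s"
      show "\<bar>G m s - F s\<bar> < \<delta>"
      proof (cases "Tp \<le> s")
        case True
        have "\<bar>G m Tp - F Tp\<bar> < \<delta> / 2" using elim gSN by (metis atMost_iff order_refl)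
        moreover have "F Tp = 1" "F s = 1" using F_one True by auto
        moreover have "G m Tp \<le> G m s" using mono True by simp
        moreover have "G m s \<le> 1" by (rule le1)
        ultimately show ?thesis using d by linarith
      next
        case False
        define x where "x = s * real (Suc N) / Tp"
        have x0: "x \<ge> 0" unfolding x_def using s0 Tp_pos by simp
        define j where "j = nat \<lfloor>x\<rfloor>"
        have jx: "real j \<le> x" "x < real j + 1"
          unfolding j_def using x0 by (simp_all add: of_nat_nat)
        have xN: "x < real (Suc N)" unfolding x_def using False Tp_pos s0
          by (simp add: divide_less_eq)
        have jN: "j \<le> N" using jx xN by simp
        have gj: "g j \<le> s"
        proof -
          have "real j * Tp \<le> s * real (Suc N)" using jx(1) Tp_pos unfolding x_def by (simp add: le_divide_eq)
          then show ?thesis unfolding g_def by (simp add: divide_le_eq mult.commute)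
        qed
        have gj1: "s \<le> g (Suc j)"
        proof -
          have "s * real (Suc N) < (real j + 1) * Tp" using jx(2) Tp_pos unfolding x_def by (simp add: divide_less_eq)
          then show ?thesis unfolding g_def by (simp add: le_divide_eq mult.commute add.commute)
        qed
        have in1: "g j \<in> {0..Tp}" "g (Suc j) \<in> {0..Tp}" using gin jN by auto
        have "dist (g (Suc j)) (g j) < \<eta>"
          using gdist[of j] TpN Tp_pos by (simp add: dist_real_def)
        then have Fd: "\<bar>F (g (Suc j)) - F (g j)\<bar> < \<delta> / 2"
          using \<eta>F[OF in1(1) in1(2)] by (simp add: dist_real_def)
        have e1: "\<bar>G m (g j) - F (g j)\<bar> < \<delta> / 2" using elim jN by simp
        have e2: "\<bar>G m (g (Suc j)) - F (g (Suc j))\<bar> < \<delta> / 2" using elim jN by simp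
        have "F (g j) \<le> F s" "F s \<le> F (g (Suc j))" using F_mono gj gj1 by auto
        moreover have "G m (g j) \<le> G m s" "G m s \<le> G m (g (Suc j))" using mono gj gj1 by auto
        ultimately show ?thesis using Fd e1 e2 by linarith
      qed
    qed
  qed
qed

end

context full_setting begin
interpretation M: prob_space M by (rule M_prob)

lemma psi_bounds: "0 \<le> x \<Longrightarrow> x \<le> 1 \<Longrightarrow> 0 \<le> psi_S mu x \<and> psi_S mu x \<le> Tp"
  using F_psi by auto

lemma min_t_eq: "t \<ge> 0 \<Longrightarrow> min t 1 = psi_S mu (F (Tp * t)) / Tp"
proof -
  assume t: "t \<ge> 0"
  have "F (Tp * t) = F (Tp * min t 1)"
  proof (cases "t \<le> 1")
    case True then show ?thesis by simp
  next
    case False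
    then have "Tp \<le> Tp * t" using Tp_pos by simp
    then show ?thesis using False F_one[of "Tp * t"] F_one[of Tp] by simp
  qed
  moreover have "psi_S mu (F (Tp * min t 1)) = Tp * min t 1"
    using t Tp_pos by (intro psi_F) (auto simp: min_def)
  ultimately show ?thesis using Tp_pos by simp
qed

theorem part1:
  fixes mlam :: "real \<Rightarrow> nat"
  assumes mlam_lim: "filterlim mlam at_top (at_right 0)" and T0: "T0 > 0"
  shows "AE \<omega> in M.
        ((\<lambda>lam. SUP t\<in>{0..T0}.
            \<bar>min (psi_S mu
                   (real (card {i \<in> {- int (mlam lam) .. int (mlam lam)}.
                              sr_count (\<lambda>k. Z i k \<omega>) (T_S mu * t) > 0})
                    / real (2 * mlam lam + 1)) / T_S mu) 1
             - min t 1\<bar>) \<longlongrightarrow> 0) (at_right 0)"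
proof -
  have AEc: "AE \<omega> in M. \<forall>j N. (\<lambda>m. avg m (Tp * real j / real (Suc N)) \<omega>) \<longlonglongrightarrow> F (Tp * real j / real (Suc N))"
    by (subst AE_all_countable, intro allI, subst AE_all_countable, intro allI) (rule AE_avg_conv)
  show ?thesis
    using AEc AE_Z_pos
  proof eventually_elim
    case (elim \<omega>)
    have cnt: "{i \<in> {- int m .. int m}. sr_count (\<lambda>k. Z i k \<omega>) (Tp * t) > 0}
        = {i\<in>{- int m..int m}. Z i 0 \<omega> \<le> Tp * t}" for m t
    proof -
      have "sr_count (\<lambda>k. Z i k \<omega>) (Tp * t) > 0 \<longleftrightarrow> Z i 0 \<omega> \<le> Tp * t" for i
        unfolding sr_count_pos_iff
        by (rule exists_sum_iff) (use elim(2) in \<open>auto intro: less_imp_le\<close>)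
      then show ?thesis by auto
    qed
    define h where "h lam t = \<bar>min (psi_S mu (avg (mlam lam) (Tp * t) \<omega>) / Tp) 1 - min t 1\<bar>" for lam t
    have eq: "(\<lambda>lam. SUP t\<in>{0..T0}.
            \<bar>min (psi_S mu
                   (real (card {i \<in> {- int (mlam lam) .. int (mlam lam)}.
                              sr_count (\<lambda>k. Z i k \<omega>) (T_S mu * t) > 0})
                    / real (2 * mlam lam + 1)) / T_S mu) 1
             - min t 1\<bar>) = (\<lambda>lam. SUP t\<in>{0..T0}. h lam t)"
      by (simp only: T_S_eq cnt h_def avg_def)
    show ?case unfolding eq
    proof (rule tendstoI)
      fix \<epsilon> :: real assume eps: "\<epsilon> > 0"
      have "\<epsilon> * Tp / 2 > 0" using eps Tp_pos by simp
      then obtain \<delta> where d: "\<delta> > 0"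
        and dpsi: "\<And>x x'. x \<in> {0..1} \<Longrightarrow> x' \<in> {0..1} \<Longrightarrow> dist x' x < \<delta> \<Longrightarrow> dist (psi_S mu x') (psi_S mu x) < \<epsilon> * Tp / 2"
        using psi_ucont unfolding uniformly_continuous_on_def by metis
      have evm: "eventually (\<lambda>m. \<forall>s\<ge>0. \<bar>avg m s \<omega> - F s\<bar> < \<delta>) sequentially"
        by (rule GC[of "\<lambda>m s. avg m s \<omega>"]) (use elim(1) d avg_mono avg_range in auto)
      have evl: "eventually (\<lambda>lam. \<forall>s\<ge>0. \<bar>avg (mlam lam) s \<omega> - F s\<bar> < \<delta>) (at_right 0)"
        using filterlim_iff[THEN iffD1, OF mlam_lim, rule_format, OF evm] by simp
      show "eventually (\<lambda>lam. dist (SUP t\<in>{0..T0}. h lam t) 0 < \<epsilon>) (at_right 0)"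
        using evl
      proof eventually_elim
        case (elim lam)
        have hb: "0 \<le> h lam t \<and> h lam t < \<epsilon> / 2" if t: "t \<in> {0..T0}" for t
        proof -
          define x' where "x' = avg (mlam lam) (Tp * t) \<omega>"
          define x where "x = F (Tp * t)"
          have t0: "t \<ge> 0" using t by simp
          have "Tp * t \<ge> 0" using t0 Tp_pos by simp
          then have dx: "dist x' x < \<delta>" using elim unfolding x'_def x_def dist_real_def by blast
          have x'r: "x' \<in> {0..1}" unfolding x'_def using avg_range by auto
          have xr: "x \<in> {0..1}" unfolding x_def using F_range by auto
          have pd: "\<bar>psi_S mu x' - psi_S mu x\<bar> < \<epsilon> * Tp / 2"
            using dpsi[OF xr x'r dx] by (simp add: dist_real_def)
          have "psi_S mu x' \<le> Tp" using psi_bounds x'r by auto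
          then have m1: "min (psi_S mu x' / Tp) 1 = psi_S mu x' / Tp" using Tp_pos by (simp add: divide_le_eq_1)
          have "h lam t = \<bar>psi_S mu x' / Tp - psi_S mu x / Tp\<bar>"
            unfolding h_def x'_def[symmetric] m1 min_t_eq[OF t0] x_def ..
          also have "\<dots> = \<bar>psi_S mu x' - psi_S mu x\<bar> / Tp"
            using Tp_pos by (simp add: diff_divide_distrib[symmetric])
          also have "\<dots> < \<epsilon> / 2" using pd Tp_pos by (simp add: divide_less_eq mult.commute)
          finally show ?thesis unfolding h_def by simp
        qed
        have ne: "{0..T0} \<noteq> {}" using T0 by simp
        have bdd: "bdd_above (h lam ` {0..T0})"
        proof (rule bdd_aboveI[of _ "\<epsilon> / 2"])
          fix y assume "y \<in> h lam ` {0..T0}"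
          then obtain t where "t \<in> {0..T0}" "y = h lam t" by blast
          then show "y \<le> \<epsilon> / 2" using hb[of t] by linarith
        qed
        have "(SUP t\<in>{0..T0}. h lam t) \<le> \<epsilon> / 2"
        proof (rule cSUP_least[OF ne])
          fix t assume "t \<in> {0..T0}"
          then show "h lam t \<le> \<epsilon> / 2" using hb[of t] by linarith
        qed
        moreover have "h lam 0 \<le> (SUP t\<in>{0..T0}. h lam t)"
          using T0 by (intro cSUP_upper[OF _ bdd]) simp
        moreover have "0 \<le> h lam 0" using hb[of 0] T0 by simp
        ultimately show ?case using eps by (simp add: dist_real_def)
      qed
    qed
  qed
qed

end

theorem mainTheorem12:
  fixes mu :: "real measure"
    and M :: "'a measure"
    and Z :: "int \<Rightarrow> nat \<Rightarrow> 'a \<Rightarrow> real"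
    and mlam :: "real \<Rightarrow> nat"
  assumes mu_prob: "prob_space mu"
    and mu_sets: "sets mu = sets borel"
    and mu_pos: "emeasure mu {..0} = 0"
    and mu_bdd: "\<exists>B. emeasure mu {B<..} = 0"
    and mlam_lim: "filterlim mlam at_top (at_right 0)"
    and M_prob: "prob_space M"
    and Z_indep: "prob_space.indep_vars M (\<lambda>_. borel) (\<lambda>(i, k). Z i k) UNIV"
    and Z_first: "\<And>i. distr M borel (Z i 0) = nu_S mu"
    and Z_incr: "\<And>i k. distr M borel (Z i (Suc k)) = mu"
  shows
    "(\<forall>T>0. AE \<omega> in M.
        ((\<lambda>lam. SUP t\<in>{0..T}.
            \<bar>min (psi_S mu
                   (real (card {i \<in> {- int (mlam lam) .. int (mlam lam)}.
                              sr_count (\<lambda>k. Z i k \<omega>) (T_S mu * t) > 0})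
                    / real (2 * mlam lam + 1)) / T_S mu) 1
             - min t 1\<bar>) \<longlongrightarrow> 0) (at_right 0))
     \<and> (\<forall>t\<ge>0. \<forall>k::nat.
        measure M {\<omega> \<in> space M.
            finite (Cblock (\<lambda>i. min (sr_count (\<lambda>j. Z i j \<omega>) (T_S mu * t)) 1) 0)
            \<and> card (Cblock (\<lambda>i. min (sr_count (\<lambda>j. Z i j \<omega>) (T_S mu * t)) 1) 0) = k}
        = q_S mu k (min t 1))"
  proof -
  interpret full_setting mu M Z
    by (intro full_setting.intro mu_setting.intro full_setting_axioms.intro) (fact assms)+
  show ?thesis
    using part1[OF mlam_lim] part2 by blast
qed

end
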